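(* Let $E=(A\subset B)\in\mathcal S$ have Klein tableau $\Pi=[\gamma^0,\ldots,\gamma^e;\varphi^2,\ldots,\varphi^e]$ and let $k\le\ell\le e$ be natural numbers. Then the embeddings $E\!\downarrow_{\ell-k}|^k$ and $E|^\ell\!\downarrow_{\ell-k}$ coincide as objects of $\mathcal S$ (both equal $(p^{\ell-k}A/p^\ell A\subset B/p^\ell A)$), and their Klein tableau is $$[\gamma^{\ell-k},\gamma^{\ell-k+1},\ldots,\gamma^\ell;\varphi^{\ell-k+2},\ldots,\varphi^\ell]=\Pi|_k^\ell.$$ In particular, for $k=2$ the Klein tableau is $\Pi|_2^\ell=[\gamma^{\ell-2},\gamma^{\ell-1},\gamma^\ell;\varphi^\ell]$.
   Context: Let $R$ be a commutative principal ideal domain, $p$ a generator of a maximal ideal, $k_0=R/(p)$. A $p$-module is a finite-length $R$-module annihilated by some power of $p$. For a $p$-module $B$, $\mathrm{type}(B)$ is the partition $\beta$ with conjugate $\beta'_i=\dim_{k_0}p^{i-1}B/p^iB$. $\mathcal S$ is the category of embeddings $(A\subset B)$ of submodules in $p$-modules. For $E=(A\subset B)$: $E\!\downarrow_s=(p^sA\subset B)$ and $E|^\ell=(A/p^\ell A\subset B/p^\ell A)$. Partitions are drawn with the $i$-th column of length equal to the $i$-th part, rows numbered from the top. Klein tableau of $E=(A\subset B)$, $e$ the exponent of $A$: $\Pi(E)=[\gamma^0,\ldots,\gamma^e;\varphi^2,\ldots,\varphi^e]$ with $\gamma^i=\mathrm{type}(B/p^iA)$, and $\varphi^\ell$ the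 unique map from the boxes of the skew diagram $\gamma^\ell\setminus\gamma^{\ell-1}$ to positive integers, weakly increasing from left to right in each row, such that for $r\ge1$ the number of boxes in row $m$ with value $r$ equals $(\gamma^{\ell,r})'_m-(\gamma^{\ell,r-1})'_m$, where $\gamma^{\ell,r}=\mathrm{type}\big(B/(p^\ell A+p(p^{\ell-2}A\cap p^rB))\big)$. Restriction: for $u\le\ell\le e$, $\Pi|_u^\ell=[\gamma^{\ell-u},\ldots,\gamma^\ell;\varphi^{\ell-u+2},\ldots,\varphi^\ell]$, regarded as a Klein tableau whose stripe $\gamma^{\ell-u+j}\setminus\gamma^{\ell-u+j-1}$ is labelled $j$, subscripts retained. *)

theory Defs
  imports Complex_Main
begin

definition r_ideal :: "'r::comm_ring_1 set \<Rightarrow> bool" where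
  "r_ideal I \<longleftrightarrow> 0 \<in> I \<and> (\<forall>x\<in>I. \<forall>y\<in>I. x + y \<in> I) \<and> (\<forall>r. \<forall>x\<in>I. r * x \<in> I)"

definition principal_ideal_domain :: "'r::idom itself \<Rightarrow> bool" where
  "principal_ideal_domain _ \<longleftrightarrow> (\<forall>I::'r set. r_ideal I \<longrightarrow> (\<exists>a. I = {a * x | x. True}))"

definition maximal_ideal :: "'r::comm_ring_1 set \<Rightarrow> bool" where
  "maximal_ideal I \<longleftrightarrow> r_ideal I \<and> I \<noteq> UNIV \<and>
     (\<forall>J. r_ideal J \<and> I \<subseteq> J \<longrightarrow> J = I \<or> J = UNIV)"

definition msum :: "'m::ab_group_add set \<Rightarrow> 'm set \<Rightarrow> 'm set" where
  "msum C D = {c + d | c d. c \<in> C \<and> d \<in> D}"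

definition pw :: "('r::comm_ring_1 \<Rightarrow> 'm::ab_group_add \<Rightarrow> 'm) \<Rightarrow> 'r \<Rightarrow> nat \<Rightarrow> 'm set \<Rightarrow> 'm set" where
  "pw sc p s X = sc (p ^ s) ` X"

definition finite_length :: "('r::comm_ring_1 \<Rightarrow> 'm::ab_group_add \<Rightarrow> 'm) \<Rightarrow> 'm set \<Rightarrow> bool" where
  "finite_length sc B \<longleftrightarrow> (\<exists>N::nat. \<forall>(f::nat \<Rightarrow> 'm set) n.
      (\<forall>i\<le>n. module.subspace sc (f i) \<and> f i \<subseteq> B) \<and> (\<forall>i<n. f i \<subset> f (Suc i)) \<longrightarrow> n \<le> N)"

definition p_module :: "('r::comm_ring_1 \<Rightarrow> 'm::ab_group_add \<Rightarrow> 'm) \<Rightarrow> 'r \<Rightarrow> 'm set \<Rightarrow> bool" where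
  "p_module sc p B \<longleftrightarrow> module.subspace sc B \<and> finite_length sc B \<and>
      (\<exists>n. \<forall>b\<in>B. sc (p ^ n) b = 0)"

text \<open>k0-dimension of the quotient N/M (where M \<subseteq> N and p N \<subseteq> M, so N/M is a
  k0 = R/(p) vector space): the least size of a spanning set.\<close>
definition qdim :: "('r::comm_ring_1 \<Rightarrow> 'm::ab_group_add \<Rightarrow> 'm) \<Rightarrow> 'm set \<Rightarrow> 'm set \<Rightarrow> nat" where
  "qdim sc N M = (LEAST n. \<exists>S. finite S \<and> card S = n \<and> S \<subseteq> N \<and>
                               N \<subseteq> msum (module.span sc S) M)"

section \<open>Partitions as Young diagrams (sets of boxes (row, column), 1-indexed)\<close>

text \<open>type(B/D): the partition whose conjugate has parts
  beta'_m = dim_k0 p^(m-1)(B/D) / p^m(B/D); row m (from the top) has length beta'_m.\<close>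
definition ptype :: "('r::comm_ring_1 \<Rightarrow> 'm::ab_group_add \<Rightarrow> 'm) \<Rightarrow> 'r \<Rightarrow> 'm set \<Rightarrow> 'm set \<Rightarrow> (nat \<times> nat) set" where
  "ptype sc p B D = {(m, c). 1 \<le> m \<and> 1 \<le> c \<and>
      c \<le> qdim sc (msum (pw sc p (m - 1) B) D) (msum (pw sc p m B) D)}"

definition rowlen :: "(nat \<times> nat) set \<Rightarrow> nat \<Rightarrow> nat" where
  "rowlen Y m = card {c. (m, c) \<in> Y}"

text \<open>A triple (A, B, C) with C \<subseteq> A \<subseteq> B submodules of the ambient module stands for the
  embedding (A/C \<subseteq> B/C). An embedding (A \<subseteq> B) is the triple (A, B, {0}).\<close>
type_synonym 'm emb = "'m set \<times> 'm set \<times> 'm set"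

definition emb_down :: "('r::comm_ring_1 \<Rightarrow> 'm::ab_group_add \<Rightarrow> 'm) \<Rightarrow> 'r \<Rightarrow> nat \<Rightarrow> 'm emb \<Rightarrow> 'm emb" where
  "emb_down sc p s E = (case E of (A, B, C) \<Rightarrow> (msum (pw sc p s A) C, B, C))"

definition emb_restr :: "('r::comm_ring_1 \<Rightarrow> 'm::ab_group_add \<Rightarrow> 'm) \<Rightarrow> 'r \<Rightarrow> nat \<Rightarrow> 'm emb \<Rightarrow> 'm emb" where
  "emb_restr sc p l E = (case E of (A, B, C) \<Rightarrow> (A, B, msum (pw sc p l A) C))"

definition kexp :: "('r::comm_ring_1 \<Rightarrow> 'm::ab_group_add \<Rightarrow> 'm) \<Rightarrow> 'r \<Rightarrow> 'm emb \<Rightarrow> nat" where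
  "kexp sc p E = (case E of (A, B, C) \<Rightarrow> (LEAST e. pw sc p e A \<subseteq> C))"

definition kgamma :: "('r::comm_ring_1 \<Rightarrow> 'm::ab_group_add \<Rightarrow> 'm) \<Rightarrow> 'r \<Rightarrow> 'm emb \<Rightarrow> nat \<Rightarrow> (nat \<times> nat) set" where
  "kgamma sc p E i = (case E of (A, B, C) \<Rightarrow> ptype sc p B (msum (pw sc p i A) C))"

text \<open>gamma^{l,r} = type((B/C) / (p^l A' + p (p^(l-2) A' \<inter> p^r B'))) with A' = A/C, B' = B/C,
  computed via preimages in B.\<close>
definition kgamma2 :: "('r::comm_ring_1 \<Rightarrow> 'm::ab_group_add \<Rightarrow> 'm) \<Rightarrow> 'r \<Rightarrow> 'm emb \<Rightarrow> nat \<Rightarrow> nat \<Rightarrow> (nat \<times> nat) set" where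
  "kgamma2 sc p E l r = (case E of (A, B, C) \<Rightarrow>
     ptype sc p B (msum (msum (pw sc p l A) C)
        (pw sc p 1 (msum (pw sc p (l - 2) A) C \<inter> msum (pw sc p r B) C))))"

text \<open>phi^l: the unique filling of the skew diagram gamma^l \ gamma^(l-1) (value 0 outside it)\<close>
definition kphi :: "('r::comm_ring_1 \<Rightarrow> 'm::ab_group_add \<Rightarrow> 'm) \<Rightarrow> 'r \<Rightarrow> 'm emb \<Rightarrow> nat \<Rightarrow> (nat \<times> nat \<Rightarrow> nat)" where
  "kphi sc p E l = (THE f.
     let Sk = kgamma sc p E l - kgamma sc p E (l - 1) in
     (\<forall>x. x \<notin> Sk \<longrightarrow> f x = 0) \<and>
     (\<forall>x\<in>Sk. 1 \<le> f x) \<and>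
     (\<forall>m c c'. (m, c) \<in> Sk \<and> (m, c') \<in> Sk \<and> c \<le> c' \<longrightarrow> f (m, c) \<le> f (m, c')) \<and>
     (\<forall>r\<ge>1. \<forall>m\<ge>1. int (card {c. (m, c) \<in> Sk \<and> f (m, c) = r}) =
          int (rowlen (kgamma2 sc p E l r) m) - int (rowlen (kgamma2 sc p E l (r - 1)) m)))"

definition klein_tableau :: "('r::comm_ring_1 \<Rightarrow> 'm::ab_group_add \<Rightarrow> 'm) \<Rightarrow> 'r \<Rightarrow> 'm emb \<Rightarrow>
    (nat \<times> nat) set list \<times> (nat \<times> nat \<Rightarrow> nat) list" where
  "klein_tableau sc p E =
     (map (kgamma sc p E) [0..<kexp sc p E + 1], map (kphi sc p E) [2..<kexp sc p E + 1])"

text \<open>Pi|_u^l = [gamma^(l-u), ..., gamma^l; phi^(l-u+2), ..., phi^l] (list position j of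
  the gamma list is stripe label j; filling values retained)\<close>
definition tab_restrict :: "(nat \<times> nat) set list \<times> (nat \<times> nat \<Rightarrow> nat) list \<Rightarrow> nat \<Rightarrow> nat \<Rightarrow>
    (nat \<times> nat) set list \<times> (nat \<times> nat \<Rightarrow> nat) list" where
  "tab_restrict T u l = (case T of (gs, fs) \<Rightarrow>
     (take (u + 1) (drop (l - u) gs), take (u - 1) (drop (l - u) fs)))"

end

theory Submission
  imports Defs
begin

lemma msum_zero[simp]: "msum X {0} = X"
  by (auto simp: msum_def)

context module
begin

lemma pw_pw: "pw scale p a (pw scale p b X) = pw scale p (a + b) X"
  by (auto simp: pw_def image_image power_add)

lemma subspace_pw: "subspace X \<Longrightarrow> subspace (pw scale p n X)"
proof (rule subspaceI)
  assume X: "subspace X"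
  show "0 \<in> pw scale p n X" unfolding pw_def using X
    by (metis image_eqI scale_zero_right subspace_0)
  fix x y assume "x \<in> pw scale p n X" "y \<in> pw scale p n X"
  then obtain a b where ab: "a \<in> X" "b \<in> X" "x = scale (p^n) a" "y = scale (p^n) b"
    unfolding pw_def by auto
  then have "x + y = scale (p^n) (a + b)" by (simp add: scale_right_distrib)
  then show "x + y \<in> pw scale p n X" unfolding pw_def using ab X
    by (auto intro: subspace_add)
next
  assume X: "subspace X"
  fix c x assume "x \<in> pw scale p n X"
  then obtain a where a: "a \<in> X" "x = scale (p^n) a" unfolding pw_def by auto
  then have "scale c x = scale (p^n) (scale c a)" by (simp add: mult.commute)
  moreover have "scale c a \<in> X" using a X by (auto intro: subspace_scale)
  ultimately show "scale c x \<in> pw scale p n X" unfolding pw_def by (rule image_eqI)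
qed

lemma pw_mono: "subspace X \<Longrightarrow> a \<le> b \<Longrightarrow> pw scale p b X \<subseteq> pw scale p a X"
proof -
  assume X: "subspace X" and ab: "a \<le> b"
  have "pw scale p b X = pw scale p a (pw scale p (b - a) X)"
    using ab by (simp add: pw_pw)
  also have "\<dots> \<subseteq> pw scale p a X"
    using X by (auto simp: pw_def subspace_scale)
  finally show ?thesis .
qed

lemma msum_absorb: "subspace X \<Longrightarrow> Y \<subseteq> X \<Longrightarrow> 0 \<in> Y \<Longrightarrow> msum X Y = X"
proof (intro equalityI subsetI)
  fix w assume X: "subspace X" "Y \<subseteq> X" and "w \<in> msum X Y"
  then obtain x y where "w = x + y" "x \<in> X" "y \<in> Y" unfolding msum_def by blast
  then show "w \<in> X" using X subspace_add by blast
next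
  fix w assume "0 \<in> Y" "w \<in> X"
  then have "w = w + 0 \<and> w \<in> X \<and> 0 \<in> Y" by simp
  then show "w \<in> msum X Y" unfolding msum_def by blast
qed

lemma pw_zero_in: "subspace X \<Longrightarrow> 0 \<in> pw scale p n X"
  unfolding pw_def by (metis image_eqI scale_zero_right subspace_0)

lemma modular: "subspace X \<Longrightarrow> Z \<subseteq> X \<Longrightarrow> X \<inter> msum Y Z = msum (X \<inter> Y) Z"
proof (intro equalityI subsetI)
  assume X: "subspace X" "Z \<subseteq> X"
  fix w assume "w \<in> X \<inter> msum Y Z"
  then obtain y z where w: "w = y + z" "y \<in> Y" "z \<in> Z" "w \<in> X" unfolding msum_def by auto
  have "y = w - z" using w by simp
  moreover have "z \<in> X" using X w by auto
  then have "w - z \<in> X" by (rule subspace_diff[OF X(1) w(4)])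
  ultimately have "y \<in> X" by simp
  then show "w \<in> msum (X \<inter> Y) Z" using w unfolding msum_def by auto
next
  assume X: "subspace X" "Z \<subseteq> X"
  fix w assume "w \<in> msum (X \<inter> Y) Z"
  then obtain y z where w: "w = y + z" "y \<in> Y" "y \<in> X" "z \<in> Z" unfolding msum_def by auto
  then show "w \<in> X \<inter> msum Y Z" using X unfolding msum_def by (auto intro: subspace_add)
qed

lemma pw_msum: "pw scale p n (msum X Y) = msum (pw scale p n X) (pw scale p n Y)"
proof (intro equalityI subsetI)
  fix w assume "w \<in> pw scale p n (msum X Y)"
  then obtain x y where "x \<in> X" "y \<in> Y" "w = scale (p^n) (x + y)"
    unfolding pw_def msum_def by blast
  then have "w = scale (p^n) x + scale (p^n) y \<and> scale (p^n) x \<in> scale (p^n) ` X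
     \<and> scale (p^n) y \<in> scale (p^n) ` Y" by (simp add: scale_right_distrib)
  then show "w \<in> msum (pw scale p n X) (pw scale p n Y)" unfolding pw_def msum_def by blast
next
  fix w assume "w \<in> msum (pw scale p n X) (pw scale p n Y)"
  then obtain x y where "x \<in> X" "y \<in> Y" "w = scale (p^n) x + scale (p^n) y"
    unfolding pw_def msum_def by blast
  then have "w = scale (p^n) (x + y) \<and> x + y \<in> msum X Y"
    by (auto simp: scale_right_distrib msum_def)
  then show "w \<in> pw scale p n (msum X Y)" unfolding pw_def by blast
qed

lemma msum_absorb2: "(\<forall>x\<in>X. \<forall>y\<in>X. x + y \<in> X) \<Longrightarrow> Z \<subseteq> X \<Longrightarrow> 0 \<in> Z \<Longrightarrow>
   msum X (msum Y Z) = msum X Y"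
  unfolding msum_def
proof (auto)
  fix x y z assume h: "\<forall>x\<in>X. \<forall>y\<in>X. x + y \<in> X" "Z \<subseteq> X" "x \<in> X" "y \<in> Y" "z \<in> Z"
  have "x + (y + z) = (x + z) + y" by (simp add: algebra_simps)
  moreover have "x + z \<in> X" using h by auto
  ultimately show "\<exists>c d. x + (y + z) = c + d \<and> c \<in> X \<and> d \<in> Y" using h by blast
next
  fix x y assume "0 \<in> Z" "x \<in> X" "y \<in> Y"
  then show "\<exists>c d. x + y = c + d \<and> c \<in> X \<and> (\<exists>c da. d = c + da \<and> c \<in> Y \<and> da \<in> Z)"
    by (metis add.right_neutral)
qed

end

lemma key:
  assumes m: "module sc" and As: "module.subspace sc A" and AB: "A \<subseteq> B"
    and n: "\<forall>b\<in>B. sc (p ^ n) b = 0" and jl: "j < l"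
    and sub: "pw sc p j A \<subseteq> pw sc p l A"
  shows "pw sc p j A \<subseteq> {0}"
proof -
  interpret M: module sc by (rule m)
  have s1: "pw sc p j A \<subseteq> pw sc p (Suc j) A"
    using sub M.pw_mono[OF As, of "Suc j" l p] jl by auto
  have "pw sc p j A \<subseteq> pw sc p (j + m) A" for m
  proof (induction m)
    case 0 then show ?case by simp
  next
    case (Suc m)
    have "pw sc p m (pw sc p j A) \<subseteq> pw sc p m (pw sc p (Suc j) A)"
      using s1 unfolding pw_def by (rule image_mono)
    then have "pw sc p (j + m) A \<subseteq> pw sc p (j + Suc m) A"
      by (simp add: M.pw_pw add.commute)
    then show ?case using Suc.IH by blast
  qed
  moreover have "pw sc p (j + n) A \<subseteq> {0}"
  proof
    fix x assume "x \<in> pw sc p (j + n) A"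
    then obtain a where a: "a \<in> A" "x = sc (p ^ (j + n)) a" unfolding pw_def by auto
    then have "x = sc (p ^ j) (sc (p ^ n) a)" by (simp add: power_add)
    moreover have "sc (p ^ n) a = 0" using a AB n by auto
    ultimately show "x \<in> {0}" by simp
  qed
  ultimately show ?thesis by blast
qed

theorem lemma10:
  fixes sc :: "'r::idom \<Rightarrow> 'm::ab_group_add \<Rightarrow> 'm"
    and p :: 'r and A B :: "'m set" and k l :: nat
  assumes pid: "principal_ideal_domain TYPE('r)"
    and pmax: "maximal_ideal {p * x | x. True}"
    and modl: "module sc"
    and Bp: "p_module sc p B"
    and Asub: "module.subspace sc A" "A \<subseteq> B"
    and kl: "k \<le> l" "l \<le> kexp sc p (A, B, {0})"
  shows "emb_restr sc p k (emb_down sc p (l - k) (A, B, {0}))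
           = emb_down sc p (l - k) (emb_restr sc p l (A, B, {0}))
       \<and> emb_down sc p (l - k) (emb_restr sc p l (A, B, {0})) = (pw sc p (l - k) A, B, pw sc p l A)
       \<and> klein_tableau sc p (emb_down sc p (l - k) (emb_restr sc p l (A, B, {0})))
           = tab_restrict (klein_tableau sc p (A, B, {0})) k l
       \<and> (k = 2 \<longrightarrow> tab_restrict (klein_tableau sc p (A, B, {0})) k l
           = ([kgamma sc p (A, B, {0}) (l - 2), kgamma sc p (A, B, {0}) (l - 1),
               kgamma sc p (A, B, {0}) l], [kphi sc p (A, B, {0}) l]))"
proof -
  interpret M: module sc by (rule modl)
  have BS: "M.subspace B" using Bp unfolding p_module_def by auto
  obtain n where n: "\<forall>b\<in>B. sc (p ^ n) b = 0" using Bp unfolding p_module_def by auto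
  define E where "E = (A, B, {0::'m})"
  define A' where "A' = pw sc p (l - k) A"
  define C where "C = pw sc p l A"
  define E' where "E' = (A', B, C)"
  define K where "K = kexp sc p E"
  have lK: "l \<le> K" using kl unfolding K_def E_def by simp
  have subA: "M.subspace (pw sc p j A)" for j using M.subspace_pw[OF Asub(1)] .
  have subB: "M.subspace (pw sc p j B)" for j using M.subspace_pw[OF BS] .
  have monoA: "a \<le> b \<Longrightarrow> pw sc p b A \<subseteq> pw sc p a A" for a b using M.pw_mono[OF Asub(1)] .
  have zA: "0 \<in> pw sc p j A" for j using M.pw_zero_in[OF Asub(1)] .
  have absC: "j \<le> l \<Longrightarrow> msum (pw sc p j A) C = pw sc p j A" for j
    unfolding C_def by (rule M.msum_absorb[OF subA monoA zA])
  have e1: "emb_down sc p (l - k) (emb_restr sc p l (A, B, {0})) = E'"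
    using absC[of "l-k"] unfolding emb_down_def emb_restr_def E'_def A'_def C_def by simp
  have e2: "emb_restr sc p k (emb_down sc p (l - k) (A, B, {0})) = E'"
    unfolding emb_down_def emb_restr_def E'_def A'_def C_def using kl
    by (simp add: M.pw_pw)
  have Kdef: "K = (LEAST e. pw sc p e A \<subseteq> {0})"
    unfolding K_def E_def kexp_def msum_zero by simp
  have kexp': "kexp sc p E' = k"
    unfolding kexp_def E'_def prod.case
  proof (rule Least_equality)
    show "pw sc p k A' \<subseteq> C" unfolding A'_def C_def using kl by (simp add: M.pw_pw)
  next
    fix e assume h: "pw sc p e A' \<subseteq> C"
    show "k \<le> e"
    proof (rule ccontr)
      assume "\<not> k \<le> e"
      then have lt: "e + (l - k) < l" using kl by simp
      have "pw sc p (e + (l - k)) A \<subseteq> pw sc p l A"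
        using h unfolding A'_def C_def by (simp add: M.pw_pw)
      then have "pw sc p (e + (l - k)) A \<subseteq> {0}"
        by (rule key[OF modl Asub(1) Asub(2) n lt])
      then have "K \<le> e + (l - k)" unfolding Kdef by (rule Least_le)
      then show False using lt lK by simp
    qed
  qed
  have gam: "kgamma sc p E' i = kgamma sc p E (l - k + i)" if "i \<le> k" for i
  proof -
    have "msum (pw sc p i A') C = pw sc p (l - k + i) A"
      unfolding A'_def using that kl absC[of "i + (l - k)"] by (simp add: M.pw_pw add.commute)
    then show ?thesis unfolding kgamma_def E'_def E_def by simp
  qed
  have gam2: "kgamma2 sc p E' i r = kgamma2 sc p E (l - k + i) r" if "2 \<le> i" "i \<le> k" for i r
  proof -
    define j where "j = l - k + i"
    have jl: "j \<le> l" "2 \<le> j" using that kl unfolding j_def by auto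
    have s1: "msum (pw sc p i A') C = pw sc p j A"
      unfolding A'_def j_def using that kl absC[of "i + (l - k)"] by (simp add: M.pw_pw add.commute)
    have s2: "msum (pw sc p (i - 2) A') C = pw sc p (j - 2) A"
      unfolding A'_def j_def using that kl absC[of "i - 2 + (l - k)"]
      by (simp add: M.pw_pw add.commute)
    have s3: "pw sc p (j - 2) A \<inter> msum (pw sc p r B) C
        = msum (pw sc p (j - 2) A \<inter> pw sc p r B) C"
      unfolding C_def by (rule M.modular[OF subA monoA]) (use jl in simp)
    have s4: "pw sc p 1 (msum (pw sc p (j - 2) A \<inter> pw sc p r B) C)
        = msum (pw sc p 1 (pw sc p (j - 2) A \<inter> pw sc p r B)) (pw sc p (1 + l) A)"
      unfolding C_def by (simp add: M.pw_msum M.pw_pw)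
    have cl: "\<forall>x\<in>pw sc p j A. \<forall>y\<in>pw sc p j A. x + y \<in> pw sc p j A"
      using subA[of j] by (auto intro: M.subspace_add)
    have s5: "msum (pw sc p j A) (msum (pw sc p 1 (pw sc p (j - 2) A \<inter> pw sc p r B)) (pw sc p (1 + l) A))
        = msum (pw sc p j A) (pw sc p 1 (pw sc p (j - 2) A \<inter> pw sc p r B))"
      by (rule M.msum_absorb2[OF cl monoA zA]) (use jl in simp)
    show ?thesis
      unfolding kgamma2_def E'_def E_def prod.case msum_zero s1 s2 s3 s4 s5 j_def[symmetric] ..
  qed
  have phi: "kphi sc p E' i = kphi sc p E (l - k + i)" if "2 \<le> i" "i \<le> k" for i
  proof -
    have g1: "kgamma sc p E' i = kgamma sc p E (l - k + i)" using gam that by simp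
    have g2: "kgamma sc p E' (i - 1) = kgamma sc p E (l - k + i - 1)"
      using gam[of "i - 1"] that by simp
    have g3: "\<And>r. kgamma2 sc p E' i r = kgamma2 sc p E (l - k + i) r" using gam2 that by simp
    show ?thesis unfolding kphi_def g1 g2 g3 ..
  qed
  have gl: "map (kgamma sc p E') [0..<k + 1] = take (k + 1) (drop (l - k) (map (kgamma sc p E) [0..<K + 1]))"
    by (rule nth_equalityI) (use lK kl gam in \<open>auto simp del: upt_Suc simp: nth_take nth_drop\<close>)
  have pl: "map (kphi sc p E') [2..<k + 1] = take (k - 1) (drop (l - k) (map (kphi sc p E) [2..<K + 1]))"
    by (rule nth_equalityI) (use lK kl phi in \<open>auto simp del: upt_Suc simp: nth_take nth_drop add.commute Suc_diff_le\<close>)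
  have t3: "klein_tableau sc p E' = tab_restrict (klein_tableau sc p E) k l"
    unfolding klein_tableau_def tab_restrict_def kexp' K_def[symmetric] using gl pl by simp
  have t4: "tab_restrict (klein_tableau sc p E) 2 l
      = ([kgamma sc p E (l - 2), kgamma sc p E (l - 1), kgamma sc p E l], [kphi sc p E l])"
    if "k = 2"
  proof -
    have u1: "[l-2..<K+1] = (l-2) # (l-1) # l # [l+1..<K+1]"
    proof -
      have "[l-2..<K+1] = (l-2) # [Suc (l-2)..<K+1]" by (rule upt_conv_Cons) (use lK in simp)
      also have "Suc (l-2) = l - 1" using that kl by simp
      also have "[l-1..<K+1] = (l-1) # [Suc (l-1)..<K+1]" by (rule upt_conv_Cons) (use lK in simp)
      also have "Suc (l-1) = l" using that kl by simp
      also have "[l..<K+1] = l # [l+1..<K+1]" using upt_conv_Cons[of l "K+1"] lK by simp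
      finally show ?thesis .
    qed
    have "2 + (l-2) = l" using that kl by simp
    then have u2: "[2 + (l-2)..<K+1] = l # [l+1..<K+1]" using upt_conv_Cons[of l "K+1"] lK by simp
    show ?thesis
      unfolding klein_tableau_def tab_restrict_def K_def[symmetric] prod.case drop_map drop_upt
      using u1 u2 by (simp del: upt_Suc add: numeral_eq_Suc)
  qed
  show ?thesis using e1 e2 t3 t4 unfolding E_def[symmetric] E'_def A'_def C_def by simp
qed

end
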